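(* The median rule $\mathrm{MED}$ and the reversal scoring rule $R_{rev}$ are agenda separable: for $R\in\{\mathrm{MED},R_{rev}\}$, every agenda $\mathcal{A}$, every independent partition $\{\mathcal{A}_1,\mathcal{A}_2\}$ of $\mathcal{A}$ and every profile $P\in\mathcal{J}_{\mathcal{A}}^n$, $R(P)=\{J^1\cup J^2 \mid J^1\in R(P\downarrow\mathcal{A}_1),\ J^2\in R(P\downarrow\mathcal{A}_2)\}$.
   Context: Fix a propositional language, a consistent formula $\Gamma$ (the integrity constraint) and a number $n\ge1$ of agents. An issue is a pair $\{\varphi,\neg\varphi\}$ with $\varphi$ neither a tautology nor a contradiction. An agenda $\mathcal{A}$ is a finite set of issues; a sub-agenda is a union of some issues of $\mathcal{A}$. A judgment set over $\mathcal{A}$ is a subset $J\subseteq\mathcal{A}$; it is complete if it contains $\varphi$ or $\neg\varphi$ for each issue, and consistent if $J\cup\{\Gamma\}$ is satisfiable. $\mathcal{J}_{\mathcal{A}}$ denotes the set of complete consistent judgment sets over $\mathcal{A}$ (likewise for sub-agendas, with the same $\Gamma$). A profile is $P=\langle J_1,\dots,J_n\rangle\in\mathcal{J}_{\mathcal{A}}^n$; its restriction to a sub-agenda $\mathcal{A}'$ is $P\downarrow\mathcal{A}'=\langle J_1\cap\mathcal{A}',\dots,J_n\cap\mathcal{A}'\rangle$. $N(P,\varphi)=|\{i:\varphi\in J_i\}|$ and $d_H(J,J')=|J\setminus J'|$. A partition $\{\mathcal{A}_1,\mathcal{A}_2\}$ of $\mathcal{A}$ into sub-agendas is independent if for all $J^1\in\mathcal{J}_{\mathcal{A}_1}$,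 $J^2\in\mathcal{J}_{\mathcal{A}_2}$, $J^1\cup J^2$ is consistent. The median rule is $\mathrm{MED}(P)=\arg\max_{J\in\mathcal{J}_{\mathcal{A}}}\sum_{\varphi\in J}N(P,\varphi)$. The reversal scoring rule is $R_{rev}(P)=\arg\max_{J\in\mathcal{J}_{\mathcal{A}}}\sum_{i=1}^n\sum_{\varphi\in J}s_{rev}(J_i,\varphi)$, where $s_{rev}(J_i,\varphi)$ is the minimal number of judgment reversals needed in $J_i$ to reject $\varphi$, i.e. $\min\{d_H(J_i,J')\mid J'\in\mathcal{J}_{\mathcal{A}},\ \varphi\notin J'\}$. *)

theory Defs
  imports Main
begin

datatype 'v form =
    Atom 'v
  | Neg "'v form"
  | Conj "'v form" "'v form"
  | Disj "'v form" "'v form"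
  | Imp "'v form" "'v form"

fun eval :: "('v \<Rightarrow> bool) \<Rightarrow> 'v form \<Rightarrow> bool" where
  "eval v (Atom p) = v p"
| "eval v (Neg f) = (\<not> eval v f)"
| "eval v (Conj f g) = (eval v f \<and> eval v g)"
| "eval v (Disj f g) = (eval v f \<or> eval v g)"
| "eval v (Imp f g) = (eval v f \<longrightarrow> eval v g)"

definition satisfiable :: "'v form set \<Rightarrow> bool" where
  "satisfiable S \<longleftrightarrow> (\<exists>v. \<forall>f\<in>S. eval v f)"

definition tautology :: "'v form \<Rightarrow> bool" where
  "tautology f \<longleftrightarrow> (\<forall>v. eval v f)"

definition contradiction :: "'v form \<Rightarrow> bool" where
  "contradiction f \<longleftrightarrow> (\<forall>v. \<not> eval v f)"

definition issue :: "'v form set \<Rightarrow> bool" where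
  "issue I \<longleftrightarrow> (\<exists>f. I = {f, Neg f} \<and> \<not> tautology f \<and> \<not> contradiction f)"

definition agenda :: "'v form set set \<Rightarrow> bool" where
  "agenda A \<longleftrightarrow> finite A \<and> (\<forall>I\<in>A. issue I)"

text \<open>Complete consistent judgment sets over agenda A w.r.t. integrity constraint Gam.\<close>
definition JS :: "'v form \<Rightarrow> 'v form set set \<Rightarrow> 'v form set set" where
  "JS Gam A = {J. J \<subseteq> \<Union>A \<and> (\<forall>I\<in>A. J \<inter> I \<noteq> {}) \<and> satisfiable (insert Gam J)}"

definition profile :: "'v form \<Rightarrow> nat \<Rightarrow> 'v form set set \<Rightarrow> 'v form set list \<Rightarrow> bool" where
  "profile Gam n A P \<longleftrightarrow> length P = n \<and> (\<forall>J\<in>set P. J \<in> JS Gam A)"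

definition restrict :: "'v form set list \<Rightarrow> 'v form set set \<Rightarrow> 'v form set list" where
  "restrict P A' = map (\<lambda>J. J \<inter> \<Union>A') P"

definition support :: "'v form set list \<Rightarrow> 'v form \<Rightarrow> nat" where
  "support P f = card {i. i < length P \<and> f \<in> P ! i}"

definition dH :: "'v form set \<Rightarrow> 'v form set \<Rightarrow> nat" where
  "dH J J' = card (J - J')"

definition independent_partition ::
  "'v form \<Rightarrow> 'v form set set \<Rightarrow> 'v form set set \<Rightarrow> 'v form set set \<Rightarrow> bool" where
  "independent_partition Gam A A1 A2 \<longleftrightarrow>
     A1 \<union> A2 = A \<and> A1 \<inter> A2 = {} \<and> A1 \<noteq> {} \<and> A2 \<noteq> {} \<and>
     (\<forall>J1\<in>JS Gam A1. \<forall>J2\<in>JS Gam A2. satisfiable (insert Gam (J1 \<union> J2)))"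

definition argmax_JS :: "'v form \<Rightarrow> 'v form set set \<Rightarrow> ('v form set \<Rightarrow> nat) \<Rightarrow> 'v form set set" where
  "argmax_JS Gam A sc = {J \<in> JS Gam A. \<forall>J'\<in>JS Gam A. sc J' \<le> sc J}"

definition MED :: "'v form \<Rightarrow> 'v form set set \<Rightarrow> 'v form set list \<Rightarrow> 'v form set set" where
  "MED Gam A P = argmax_JS Gam A (\<lambda>J. \<Sum>f\<in>J. support P f)"

text \<open>If no complete consistent
judgment set rejects f, the value is set to 0 (any constant gives the same rule, since then
every candidate contains f).\<close>
definition s_rev :: "'v form \<Rightarrow> 'v form set set \<Rightarrow> 'v form set \<Rightarrow> 'v form \<Rightarrow> nat" where
  "s_rev Gam A Ji f =
     (let D = {dH Ji J' | J'. J' \<in> JS Gam A \<and> f \<notin> J'} in if D = {} then 0 else Min D)"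

definition Rrev :: "'v form \<Rightarrow> 'v form set set \<Rightarrow> 'v form set list \<Rightarrow> 'v form set set" where
  "Rrev Gam A P = argmax_JS Gam A (\<lambda>J. \<Sum>i<length P. \<Sum>f\<in>J. s_rev Gam A (P ! i) f)"

end

theory Submission
  imports Defs
begin

lemma issue_not_sub:
  assumes "issue I" "satisfiable (insert Gam X)" "I \<subseteq> X" shows False
proof -
  obtain f where I: "I = {f, Neg f}" using assms(1) unfolding issue_def by blast
  obtain v where "\<forall>g\<in>insert Gam X. eval v g" using assms(2) unfolding satisfiable_def by blast
  then have "eval v f" "eval v (Neg f)" using assms(3) I by blast+
  then show False by simp
qed

lemma sat_mono: "satisfiable (insert Gam X) \<Longrightarrow> Y \<subseteq> X \<Longrightarrow> satisfiable (insert Gam Y)"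
  unfolding satisfiable_def by blast

lemma argmax_sep:
  assumes dec: "S = {J1 \<union> J2 | J1 J2. J1 \<in> S1 \<and> J2 \<in> S2}"
    and proj: "\<And>J. J \<in> S \<Longrightarrow> \<exists>J1 J2. J = J1 \<union> J2 \<and> J1 \<in> S1 \<and> J2 \<in> S2"
    and sc: "\<And>J1 J2. J1 \<in> S1 \<Longrightarrow> J2 \<in> S2 \<Longrightarrow> (s (J1 \<union> J2)::nat) + c = s1 J1 + s2 J2"
  shows "{J \<in> S. \<forall>J'\<in>S. s J' \<le> s J} =
     {J1 \<union> J2 | J1 J2. J1 \<in> {J \<in> S1. \<forall>J'\<in>S1. s1 J' \<le> s1 J} \<and> J2 \<in> {J \<in> S2. \<forall>J'\<in>S2. s2 J' \<le> s2 J}}"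
proof (rule set_eqI, rule iffI)
  fix J assume "J \<in> {J \<in> S. \<forall>J'\<in>S. s J' \<le> s J}"
  then have J: "J \<in> S" and m: "\<And>J'. J' \<in> S \<Longrightarrow> s J' \<le> s J" by auto
  obtain J1 J2 where e: "J = J1 \<union> J2" "J1 \<in> S1" "J2 \<in> S2" using proj[OF J] by blast
  have m: "\<And>J'. J' \<in> S \<Longrightarrow> s J' \<le> s (J1 \<union> J2)" using m e(1) by simp
  have "\<forall>J'\<in>S1. s1 J' \<le> s1 J1"
  proof
    fix J' assume "J' \<in> S1"
    then have "J' \<union> J2 \<in> S" using dec e by blast
    then have "s (J' \<union> J2) \<le> s (J1 \<union> J2)" by (rule m)
    then show "s1 J' \<le> s1 J1" using sc[OF \<open>J' \<in> S1\<close> e(3)] sc[OF e(2) e(3)] by linarith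
  qed
  moreover have "\<forall>J'\<in>S2. s2 J' \<le> s2 J2"
  proof
    fix J' assume "J' \<in> S2"
    then have "J1 \<union> J' \<in> S" using dec e by blast
    then have "s (J1 \<union> J') \<le> s (J1 \<union> J2)" by (rule m)
    then show "s2 J' \<le> s2 J2" using sc[OF e(2) \<open>J' \<in> S2\<close>] sc[OF e(2) e(3)] by linarith
  qed
  ultimately show "J \<in> {J1 \<union> J2 | J1 J2. J1 \<in> {J \<in> S1. \<forall>J'\<in>S1. s1 J' \<le> s1 J} \<and> J2 \<in> {J \<in> S2. \<forall>J'\<in>S2. s2 J' \<le> s2 J}}"
    using e by blast
next
  fix J assume "J \<in> {J1 \<union> J2 | J1 J2. J1 \<in> {J \<in> S1. \<forall>J'\<in>S1. s1 J' \<le> s1 J} \<and> J2 \<in> {J \<in> S2. \<forall>J'\<in>S2. s2 J' \<le> s2 J}}"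
  then obtain J1 J2 where e: "J = J1 \<union> J2" "J1 \<in> S1" "J2 \<in> S2"
    and m1: "\<And>J'. J' \<in> S1 \<Longrightarrow> s1 J' \<le> s1 J1" and m2: "\<And>J'. J' \<in> S2 \<Longrightarrow> s2 J' \<le> s2 J2" by blast
  have "J \<in> S" using dec e by blast
  moreover have "\<forall>J'\<in>S. s J' \<le> s (J1 \<union> J2)"
  proof
    fix J' assume "J' \<in> S"
    then obtain K1 K2 where k: "J' = K1 \<union> K2" "K1 \<in> S1" "K2 \<in> S2" using proj by blast
    have "s J' = s (K1 \<union> K2)" using k(1) by simp
    then show "s J' \<le> s (J1 \<union> J2)" using sc[OF k(2) k(3)] sc[OF e(2) e(3)] m1[OF k(2)] m2[OF k(3)] by linarith
  qed
  ultimately show "J \<in> {J \<in> S. \<forall>J'\<in>S. s J' \<le> s J}" using e(1) by blast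
qed

locale sep =
  fixes Gam :: "'v form" and A A1 A2 :: "'v form set set"
  assumes ag: "agenda A" and ip: "independent_partition Gam A A1 A2"
begin

abbreviation "U1 \<equiv> \<Union>A1"
abbreviation "U2 \<equiv> \<Union>A2"

lemma AU: "A = A1 \<union> A2" and indep: "J1 \<in> JS Gam A1 \<Longrightarrow> J2 \<in> JS Gam A2 \<Longrightarrow> satisfiable (insert Gam (J1 \<union> J2))"
  using ip unfolding independent_partition_def by auto

lemma iss: "I \<in> A \<Longrightarrow> issue I" using ag unfolding agenda_def by auto

lemma finU: "finite (\<Union>A)"
proof -
  have "finite A" using ag unfolding agenda_def by auto
  moreover have "\<And>I. I \<in> A \<Longrightarrow> finite I" using iss unfolding issue_def by auto
  ultimately show ?thesis by auto
qed

lemma finJS: "finite (JS Gam A)"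
proof -
  have "JS Gam A \<subseteq> Pow (\<Union>A)" unfolding JS_def by auto
  then show ?thesis using finU finite_subset by blast
qed

lemma cross12: assumes "J1 \<in> JS Gam A1" "J2 \<in> JS Gam A2" shows "J1 \<inter> U2 \<subseteq> J2"
proof
  fix g assume g: "g \<in> J1 \<inter> U2"
  then obtain I where I: "I \<in> A2" "g \<in> I" by blast
  have isI: "issue I" using iss I AU by auto
  then obtain f where If: "I = {f, Neg f}" unfolding issue_def by blast
  have "J2 \<inter> I \<noteq> {}" using assms(2) I unfolding JS_def by auto
  then obtain h where h: "h \<in> J2" "h \<in> I" by blast
  show "g \<in> J2"
  proof (rule ccontr)
    assume "g \<notin> J2"
    then have "I \<subseteq> J1 \<union> J2" using h g I If by auto
    then show False using issue_not_sub[OF isI indep[OF assms]] by blast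
  qed
qed

lemma cross21: assumes "J1 \<in> JS Gam A1" "J2 \<in> JS Gam A2" shows "J2 \<inter> U1 \<subseteq> J1"
proof
  fix g assume g: "g \<in> J2 \<inter> U1"
  then obtain I where I: "I \<in> A1" "g \<in> I" by blast
  have isI: "issue I" using iss I AU by auto
  then obtain f where If: "I = {f, Neg f}" unfolding issue_def by blast
  have "J1 \<inter> I \<noteq> {}" using assms(1) I unfolding JS_def by auto
  then obtain h where h: "h \<in> J1" "h \<in> I" by blast
  show "g \<in> J1"
  proof (rule ccontr)
    assume "g \<notin> J1"
    then have "I \<subseteq> J1 \<union> J2" using h g I If by auto
    then show False using issue_not_sub[OF isI indep[OF assms]] by blast
  qed
qed

lemma sub1: "J1 \<in> JS Gam A1 \<Longrightarrow> J1 \<subseteq> U1" unfolding JS_def by auto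
lemma sub2: "J2 \<in> JS Gam A2 \<Longrightarrow> J2 \<subseteq> U2" unfolding JS_def by auto

lemma const:
  assumes "J1 \<in> JS Gam A1" "J2 \<in> JS Gam A2" "K1 \<in> JS Gam A1" "K2 \<in> JS Gam A2"
  shows "J1 \<inter> J2 = K1 \<inter> K2"
proof -
  have a: "X \<inter> Y = X \<inter> U2" if "X \<in> JS Gam A1" "Y \<in> JS Gam A2" for X Y
  proof -
    have "X \<inter> U2 \<subseteq> Y" by (rule cross12[OF that])
    moreover have "Y \<subseteq> U2" by (rule sub2[OF that(2)])
    ultimately show ?thesis by blast
  qed
  have b: "X \<inter> Y = Y \<inter> U1" if "X \<in> JS Gam A1" "Y \<in> JS Gam A2" for X Y
  proof -
    have "Y \<inter> U1 \<subseteq> X" by (rule cross21[OF that])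
    moreover have "X \<subseteq> U1" by (rule sub1[OF that(1)])
    ultimately show ?thesis by blast
  qed
  have "J1 \<inter> J2 = J1 \<inter> K2" using a[OF assms(1) assms(2)] a[OF assms(1) assms(4)] by simp
  also have "\<dots> = K1 \<inter> K2" using b[OF assms(1) assms(4)] b[OF assms(3) assms(4)] by simp
  finally show ?thesis .
qed

lemma JSD: "J \<in> JS Gam B \<Longrightarrow> J \<subseteq> \<Union>B \<and> (\<forall>I\<in>B. J \<inter> I \<noteq> {}) \<and> satisfiable (insert Gam J)"
  unfolding JS_def by simp

lemma JSI: "J \<subseteq> \<Union>B \<Longrightarrow> (\<And>I. I \<in> B \<Longrightarrow> J \<inter> I \<noteq> {}) \<Longrightarrow> satisfiable (insert Gam J) \<Longrightarrow> J \<in> JS Gam B"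
  unfolding JS_def by simp

lemma projB: assumes "J \<in> JS Gam A" "B \<subseteq> A" shows "J \<inter> \<Union>B \<in> JS Gam B"
proof (rule JSI)
  have J: "J \<subseteq> \<Union>A" "\<forall>I\<in>A. J \<inter> I \<noteq> {}" "satisfiable (insert Gam J)" using JSD[OF assms(1)] by auto
  show "J \<inter> \<Union>B \<subseteq> \<Union>B" by (rule Int_lower2)
  show "satisfiable (insert Gam (J \<inter> \<Union>B))" by (rule sat_mono[OF J(3) Int_lower1])
  fix I assume I: "I \<in> B"
  then have "I \<in> A" using assms(2) by blast
  then have "J \<inter> I \<noteq> {}" using J(2) by simp
  moreover have "I \<subseteq> \<Union>B" using I by (rule Union_upper)
  ultimately show "J \<inter> \<Union>B \<inter> I \<noteq> {}" by blast
qed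

lemma proj1: "J \<in> JS Gam A \<Longrightarrow> J \<inter> U1 \<in> JS Gam A1"
  by (rule projB) (use AU in simp_all)
lemma proj2: "J \<in> JS Gam A \<Longrightarrow> J \<inter> U2 \<in> JS Gam A2"
  by (rule projB) (use AU in simp_all)

lemma Jsplit: assumes "J \<in> JS Gam A" shows "J = J \<inter> U1 \<union> J \<inter> U2"
proof -
  have "J \<subseteq> \<Union>A" using JSD[OF assms] by simp
  then have "J \<subseteq> U1 \<union> U2" using AU by simp
  then show ?thesis by blast
qed

lemma union_JS: assumes "J1 \<in> JS Gam A1" "J2 \<in> JS Gam A2" shows "J1 \<union> J2 \<in> JS Gam A"
proof (rule JSI)
  show "satisfiable (insert Gam (J1 \<union> J2))" by (rule indep[OF assms])
  have a: "J1 \<subseteq> U1" "\<forall>I\<in>A1. J1 \<inter> I \<noteq> {}" using JSD[OF assms(1)] by simp_all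
  have b: "J2 \<subseteq> U2" "\<forall>I\<in>A2. J2 \<inter> I \<noteq> {}" using JSD[OF assms(2)] by simp_all
  have "U1 \<union> U2 = \<Union>A" using AU by simp
  then show "J1 \<union> J2 \<subseteq> \<Union>A" using a(1) b(1) by blast
  fix I assume "I \<in> A"
  then have "I \<in> A1 \<or> I \<in> A2" using AU by simp
  then show "(J1 \<union> J2) \<inter> I \<noteq> {}"
  proof
    assume "I \<in> A1" then have "J1 \<inter> I \<noteq> {}" using a(2) by simp
    then show ?thesis by blast
  next
    assume "I \<in> A2" then have "J2 \<inter> I \<noteq> {}" using b(2) by simp
    then show ?thesis by blast
  qed
qed

lemma projex: "J \<in> JS Gam A \<Longrightarrow> \<exists>J1 J2. J = J1 \<union> J2 \<and> J1 \<in> JS Gam A1 \<and> J2 \<in> JS Gam A2"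
  using proj1 proj2 Jsplit by metis

lemma dec: "JS Gam A = {J1 \<union> J2 | J1 J2. J1 \<in> JS Gam A1 \<and> J2 \<in> JS Gam A2}"
proof (rule set_eqI, rule iffI)
  fix J assume "J \<in> JS Gam A"
  then show "J \<in> {J1 \<union> J2 | J1 J2. J1 \<in> JS Gam A1 \<and> J2 \<in> JS Gam A2}" using projex by simp
next
  fix J assume "J \<in> {J1 \<union> J2 | J1 J2. J1 \<in> JS Gam A1 \<and> J2 \<in> JS Gam A2}"
  then obtain J1 J2 where "J = J1 \<union> J2" "J1 \<in> JS Gam A1" "J2 \<in> JS Gam A2" by blast
  then show "J \<in> JS Gam A" using union_JS by simp
qed

lemma un_proj1: "J1 \<in> JS Gam A1 \<Longrightarrow> J2 \<in> JS Gam A2 \<Longrightarrow> (J1 \<union> J2) \<inter> U1 = J1"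
  using cross21 sub1 by blast
lemma un_proj2: "J1 \<in> JS Gam A1 \<Longrightarrow> J2 \<in> JS Gam A2 \<Longrightarrow> (J1 \<union> J2) \<inter> U2 = J2"
  using cross12 sub2 by blast

lemma dH_split:
  assumes "J \<in> JS Gam A" "J' \<in> JS Gam A"
  shows "dH J J' = dH (J \<inter> U1) (J' \<inter> U1) + dH (J \<inter> U2) (J' \<inter> U2)"
proof -
  have e: "J - J' = (J \<inter> U1 - J' \<inter> U1) \<union> (J \<inter> U2 - J' \<inter> U2)"
    using Jsplit[OF assms(1)] by blast
  have c: "J \<inter> U1 \<inter> (J \<inter> U2) = J' \<inter> U1 \<inter> (J' \<inter> U2)"
    using const proj1 proj2 assms by blast
  have d: "(J \<inter> U1 - J' \<inter> U1) \<inter> (J \<inter> U2 - J' \<inter> U2) = {}" using c by blast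
  have f: "finite J" using assms(1) finU unfolding JS_def by (auto intro: finite_subset)
  show ?thesis unfolding dH_def e by (rule card_Un_disjoint) (use f d in auto)
qed

lemma srev_eq:
  assumes J1: "J1 \<in> JS Gam A1" and f: "f \<in> J1" and Ji: "Ji \<in> JS Gam A"
  shows "s_rev Gam A Ji f = s_rev Gam A1 (Ji \<inter> U1) f"
proof -
  define D where "D = {dH Ji J' | J'. J' \<in> JS Gam A \<and> f \<notin> J'}"
  define D1 where "D1 = {dH (Ji \<inter> U1) J' | J'. J' \<in> JS Gam A1 \<and> f \<notin> J'}"
  have sD: "s_rev Gam A Ji f = (if D = {} then 0 else Min D)" unfolding s_rev_def D_def Let_def by simp
  have sD1: "s_rev Gam A1 (Ji \<inter> U1) f = (if D1 = {} then 0 else Min D1)" unfolding s_rev_def D1_def Let_def by simp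
  have Ji2: "Ji \<inter> U2 \<in> JS Gam A2" using proj2[OF Ji] .
  show ?thesis
  proof (cases "f \<in> U2")
    case True
    have all2: "\<And>K. K \<in> JS Gam A2 \<Longrightarrow> f \<in> K" using cross12[OF J1] f True by blast
    have all1: "\<And>K. K \<in> JS Gam A1 \<Longrightarrow> f \<in> K"
      using cross21[OF _ Ji2] all2[OF Ji2] sub1[OF J1] f by blast
    have "D = {}" unfolding D_def using all2 proj2 by blast
    moreover have "D1 = {}" unfolding D1_def using all1 by blast
    ultimately show ?thesis using sD sD1 by simp
  next
    case False
    have finD: "finite D" unfolding D_def using finJS by simp
    show ?thesis
    proof (cases "D1 = {}")
      case True
      have "D = {}" unfolding D_def using True proj1 unfolding D1_def by blast
      then show ?thesis using sD sD1 True by simp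
    next
      case ne: False
      have finD1: "finite D1"
      proof -
        have "D1 \<subseteq> (\<lambda>J'. dH (Ji \<inter> U1) J') ` Pow U1" unfolding D1_def JS_def by auto
        moreover have "finite U1" using finU AU by (auto intro: finite_subset)
        ultimately show ?thesis by (auto intro: finite_subset)
      qed
      obtain K1 where K1: "K1 \<in> JS Gam A1" "f \<notin> K1" "Min D1 = dH (Ji \<inter> U1) K1"
        using Min_in[OF finD1 ne] unfolding D1_def by blast
      have KJ: "K1 \<union> (Ji \<inter> U2) \<in> JS Gam A" using union_JS[OF K1(1) Ji2] .
      have fK: "f \<notin> K1 \<union> (Ji \<inter> U2)" using K1 False by blast
      have dv: "dH Ji (K1 \<union> (Ji \<inter> U2)) = Min D1"
        using dH_split[OF Ji KJ] un_proj1[OF K1(1) Ji2] un_proj2[OF K1(1) Ji2] K1(3)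
        by (simp add: dH_def)
      have inD: "Min D1 \<in> D" unfolding D_def using KJ fK dv[symmetric] by blast
      have neD: "D \<noteq> {}" using inD by blast
      have le: "\<And>d. d \<in> D \<Longrightarrow> Min D1 \<le> d"
      proof -
        fix d assume "d \<in> D"
        then obtain J' where J': "J' \<in> JS Gam A" "f \<notin> J'" "d = dH Ji J'" unfolding D_def by blast
        have "dH (Ji \<inter> U1) (J' \<inter> U1) \<in> D1" unfolding D1_def using proj1[OF J'(1)] J'(2) by blast
        then have "Min D1 \<le> dH (Ji \<inter> U1) (J' \<inter> U1)" using finD1 by simp
        then show "Min D1 \<le> d" using dH_split[OF Ji J'(1)] J'(3) by simp
      qed
      have "Min D = Min D1"
        using Min_eqI[OF finD le inD] .
      then show ?thesis using sD sD1 neD ne by simp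
    qed
  qed
qed

end

theorem corollary1:
  fixes Gam :: "'v form" and n :: nat
    and A A1 A2 :: "'v form set set" and P :: "'v form set list"
  assumes "satisfiable {Gam}"
    and "n \<ge> 1"
    and "agenda A"
    and "independent_partition Gam A A1 A2"
    and "profile Gam n A P"
  shows "MED Gam A P =
           {J1 \<union> J2 | J1 J2. J1 \<in> MED Gam A1 (restrict P A1) \<and> J2 \<in> MED Gam A2 (restrict P A2)}
       \<and> Rrev Gam A P =
           {J1 \<union> J2 | J1 J2. J1 \<in> Rrev Gam A1 (restrict P A1) \<and> J2 \<in> Rrev Gam A2 (restrict P A2)}"
proof -
  interpret sep Gam A A1 A2 using assms(3,4) by unfold_locales
  have PJ: "\<And>i. i < length P \<Longrightarrow> P ! i \<in> JS Gam A" using assms(5) unfolding profile_def by auto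
  have finJ: "\<And>J. J \<in> JS Gam A \<Longrightarrow> finite J" using finU unfolding JS_def by (auto intro: finite_subset)
  have rn: "\<And>B i. i < length P \<Longrightarrow> restrict P B ! i = P ! i \<inter> \<Union>B" "\<And>B. length (restrict P B) = length P"
    unfolding restrict_def by auto
  have supp: "\<And>B f. f \<in> \<Union>B \<Longrightarrow> support (restrict P B) f = support P f"
    unfolding support_def using rn by (metis (no_types, lifting) Int_iff)
  define C where "C = (if JS Gam A1 \<noteq> {} \<and> JS Gam A2 \<noteq> {} then (SOME J. J \<in> JS Gam A1) \<inter> (SOME J. J \<in> JS Gam A2) else {})"
  have Ceq: "\<And>J1 J2. J1 \<in> JS Gam A1 \<Longrightarrow> J2 \<in> JS Gam A2 \<Longrightarrow> J1 \<inter> J2 = C"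
  proof -
    fix J1 J2 assume a: "J1 \<in> JS Gam A1" "J2 \<in> JS Gam A2"
    then have "C = (SOME J. J \<in> JS Gam A1) \<inter> (SOME J. J \<in> JS Gam A2)" unfolding C_def by auto
    then show "J1 \<inter> J2 = C" using const[OF a] a by (metis someI_ex)
  qed
  have fin12: "\<And>J1 J2. J1 \<in> JS Gam A1 \<Longrightarrow> J2 \<in> JS Gam A2 \<Longrightarrow> finite J1 \<and> finite J2"
    using finJ union_JS by (meson finite_Un)
  have m: "MED Gam A P = {J1 \<union> J2 | J1 J2. J1 \<in> MED Gam A1 (restrict P A1) \<and> J2 \<in> MED Gam A2 (restrict P A2)}"
    unfolding MED_def argmax_JS_def
  proof (rule argmax_sep[OF dec projex, where c = "\<Sum>f\<in>C. support P f"])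
    fix J1 J2 assume a: "J1 \<in> JS Gam A1" "J2 \<in> JS Gam A2"
    have "(\<Sum>f\<in>J1 \<union> J2. support P f) + (\<Sum>f\<in>J1 \<inter> J2. support P f)
        = (\<Sum>f\<in>J1. support P f) + (\<Sum>f\<in>J2. support P f)"
      using fin12[OF a] by (simp add: sum.union_inter)
    moreover have "(\<Sum>f\<in>J1. support (restrict P A1) f) = (\<Sum>f\<in>J1. support P f)"
      using sub1[OF a(1)] supp by (intro sum.cong) auto
    moreover have "(\<Sum>f\<in>J2. support (restrict P A2) f) = (\<Sum>f\<in>J2. support P f)"
      using sub2[OF a(2)] supp by (intro sum.cong) auto
    ultimately show "(\<Sum>f\<in>J1 \<union> J2. support P f) + (\<Sum>f\<in>C. support P f) =
       (\<Sum>f\<in>J1. support (restrict P A1) f) + (\<Sum>f\<in>J2. support (restrict P A2) f)"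
      using Ceq[OF a] by simp
  qed
  have r: "Rrev Gam A P = {J1 \<union> J2 | J1 J2. J1 \<in> Rrev Gam A1 (restrict P A1) \<and> J2 \<in> Rrev Gam A2 (restrict P A2)}"
    unfolding Rrev_def argmax_JS_def
  proof (rule argmax_sep[OF dec projex, where c = "\<Sum>i<length P. \<Sum>f\<in>C. s_rev Gam A (P ! i) f"])
    fix J1 J2 assume a: "J1 \<in> JS Gam A1" "J2 \<in> JS Gam A2"
    have sym: "independent_partition Gam A A2 A1"
    proof -
      have "A2 \<union> A1 = A" "A2 \<inter> A1 = {}" "A2 \<noteq> {}" "A1 \<noteq> {}"
        using assms(4) unfolding independent_partition_def by auto
      moreover have "\<forall>X\<in>JS Gam A2. \<forall>Y\<in>JS Gam A1. satisfiable (insert Gam (X \<union> Y))"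
      proof (intro ballI)
        fix X Y assume "X \<in> JS Gam A2" "Y \<in> JS Gam A1"
        then show "satisfiable (insert Gam (X \<union> Y))" using indep[of Y X] by (simp add: Un_commute)
      qed
      ultimately show ?thesis unfolding independent_partition_def by blast
    qed
    interpret s2: sep Gam A A2 A1 using assms(3) sym by unfold_locales
    have e: "\<And>i. i < length P \<Longrightarrow> (\<Sum>f\<in>J1 \<union> J2. s_rev Gam A (P ! i) f) + (\<Sum>f\<in>C. s_rev Gam A (P ! i) f)
        = (\<Sum>f\<in>J1. s_rev Gam A1 (restrict P A1 ! i) f) + (\<Sum>f\<in>J2. s_rev Gam A2 (restrict P A2 ! i) f)"
    proof -
      fix i assume i: "i < length P"
      have "(\<Sum>f\<in>J1 \<union> J2. s_rev Gam A (P ! i) f) + (\<Sum>f\<in>J1 \<inter> J2. s_rev Gam A (P ! i) f)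
        = (\<Sum>f\<in>J1. s_rev Gam A (P ! i) f) + (\<Sum>f\<in>J2. s_rev Gam A (P ! i) f)"
        using fin12[OF a] by (simp add: sum.union_inter)
      moreover have "(\<Sum>f\<in>J1. s_rev Gam A (P ! i) f) = (\<Sum>f\<in>J1. s_rev Gam A1 (restrict P A1 ! i) f)"
        using srev_eq[OF a(1) _ PJ[OF i]] rn(1)[OF i] by (intro sum.cong) auto
      moreover have "(\<Sum>f\<in>J2. s_rev Gam A (P ! i) f) = (\<Sum>f\<in>J2. s_rev Gam A2 (restrict P A2 ! i) f)"
        using s2.srev_eq[OF a(2) _ PJ[OF i]] rn(1)[OF i] by (intro sum.cong) auto
      ultimately show "?thesis i" using Ceq[OF a] by simp
    qed
    show "(\<Sum>i<length P. \<Sum>f\<in>J1 \<union> J2. s_rev Gam A (P ! i) f) + (\<Sum>i<length P. \<Sum>f\<in>C. s_rev Gam A (P ! i) f) =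
       (\<Sum>i<length (restrict P A1). \<Sum>f\<in>J1. s_rev Gam A1 (restrict P A1 ! i) f) +
       (\<Sum>i<length (restrict P A2). \<Sum>f\<in>J2. s_rev Gam A2 (restrict P A2 ! i) f)"
      unfolding rn(2) sum.distrib[symmetric] using e by (intro sum.cong) auto
  qed
  show ?thesis using m r by blast
qed

end
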